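(* Assume the hypotheses: $U_e=U_f=U\ge0$, $\beta<-2$, $\kappa_g\ge16$, $\alpha\le2\min\{\beta,-3\}-1$, deterministic source $g$, and a realization of the static velocity with $|V_k|,|W_k|\le\Xi$. Let $\varpi$ be as defined below and suppose $\varepsilon:=4U\Xi\varpi<1$. Then the iterates $\theta^{(0)}=-\Delta^{-1}g$, $\theta^{(n+1)}=\Delta^{-1}(u\cdot\nabla\theta^{(n)}-g)$ converge mode-wise to a limit $\theta^{(\infty)}$, and there is a constant $c_1$ depending only on $(\gamma_k)$, $c_g$, $\kappa_g$, $\alpha$, $\beta$ (times $U\Xi$) such that for all $k\neq0$ $$|\theta^{(1)}_k-\theta^{(\infty)}_k|\le c_1\,\varepsilon\,|k|^{-2}K_\beta(|k|).$$
   Context: Setting: $D=[0,2\pi]^3$ periodic; mean-zero functions $f=\sum_{k\in\mathbb Z^3\setminus\{0\}}f_ke^{ik\cdot x}$; $(\Delta^{-1}f)_k=-|k|^{-2}f_k$. Craya–Herring basis: for $k=(k_x,k_y,k_z)$ with $|k_h|:=\sqrt{k_x^2+k_y^2}>0$, $e_k=(k_y,-k_x,0)/|k_h|$, $f_k=(k_xk_z,k_yk_z,-|k_h|^2)/(|k||k_h|)$; for $k\ne0$ on the $z$-axis, a fixed orthonormal pair orthogonal to $k$. Source: $\Delta^{-1}g=\sum_{k\ne0}\gamma_ke^{ik\cdot x}$ with $\gamma_{-k}=\overline{\gamma_k}$, constants $c_g\ge0$, $\kappa_g>1$, $\alpha<0$, $|\gamma_k|\le c_g|k|^\alpha$ for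 $|k|\ge\kappa_g$. Velocity: $u(x)=\sum_{k\ne0}|k|^\beta U[e_kV_k+f_kW_k]e^{ik\cdot x}$ with complex $V_k,W_k$, $V_{-k}=\overline{V_k}$, $W_{-k}=\overline{W_k}$, $|V_k|,|W_k|\le\Xi$. $K_\beta(s):=\min\{1,(s/(2\kappa_g))^\beta\}$; $\varpi:=\sup_{k\neq0}K_\beta(|k|)^{-1}\sum_{j\notin\{0,k\}}|k-j|^\beta|j|^{-1}K_\beta(|j|)$ (finite since $\beta<-2$). *)

theory Defs
  imports "HOL-Analysis.Analysis"
begin

type_synonym wv = "int \<times> int \<times> int"

definition kvec :: "wv \<Rightarrow> real^3" where
  "kvec k = (case k of (a, b, c) \<Rightarrow> vector [of_int a, of_int b, of_int c])"

definition knorm :: "wv \<Rightarrow> real" where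
  "knorm k = norm (kvec k)"

definition khnorm :: "wv \<Rightarrow> real" where
  "khnorm k = (case k of (a, b, c) \<Rightarrow> sqrt (of_int a ^ 2 + of_int b ^ 2))"

definition ksub :: "wv \<Rightarrow> wv \<Rightarrow> wv" where
  "ksub k j = (case k of (a, b, c) \<Rightarrow> case j of (a', b', c') \<Rightarrow> (a - a', b - b', c - c'))"

definition kneg :: "wv \<Rightarrow> wv" where
  "kneg k = (case k of (a, b, c) \<Rightarrow> (- a, - b, - c))"

text \<open>Craya--Herring basis. For k on the z-axis (horizontal part zero) the pair
  (Ez k, Fz k) is the fixed orthonormal pair orthogonal to k (a parameter).\<close>

definition CH_e :: "(wv \<Rightarrow> real^3) \<Rightarrow> wv \<Rightarrow> real^3" where
  "CH_e Ez k = (if khnorm k > 0 then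
     (case k of (a, b, c) \<Rightarrow> vector [of_int b / khnorm k, - of_int a / khnorm k, 0])
   else Ez k)"

definition CH_f :: "(wv \<Rightarrow> real^3) \<Rightarrow> wv \<Rightarrow> real^3" where
  "CH_f Fz k = (if khnorm k > 0 then
     (case k of (a, b, c) \<Rightarrow>
        vector [of_int a * of_int c / (knorm k * khnorm k),
                of_int b * of_int c / (knorm k * khnorm k),
                - (khnorm k ^ 2) / (knorm k * khnorm k)])
   else Fz k)"

text \<open>Fourier coefficient of the velocity at mode m, dotted with the (real) vector j:
  u_m . j = |m|^beta U (V_m (e_m . j) + W_m (f_m . j)).\<close>

definition udot :: "real \<Rightarrow> real \<Rightarrow> (wv \<Rightarrow> complex) \<Rightarrow> (wv \<Rightarrow> complex)
   \<Rightarrow> (wv \<Rightarrow> real^3) \<Rightarrow> (wv \<Rightarrow> real^3) \<Rightarrow> wv \<Rightarrow> wv \<Rightarrow> complex" where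
  "udot U \<beta> V W Ez Fz m j =
     of_real (knorm m powr \<beta> * U) *
       (V m * of_real (CH_e Ez m \<bullet> kvec j) + W m * of_real (CH_f Fz m \<bullet> kvec j))"

text \<open>The summand of the k-th Fourier coefficient of u . grad theta:
  (u_{k-j} . (i j)) theta_j.\<close>

definition adv_term :: "real \<Rightarrow> real \<Rightarrow> (wv \<Rightarrow> complex) \<Rightarrow> (wv \<Rightarrow> complex)
   \<Rightarrow> (wv \<Rightarrow> real^3) \<Rightarrow> (wv \<Rightarrow> real^3) \<Rightarrow> (wv \<Rightarrow> complex) \<Rightarrow> wv \<Rightarrow> wv \<Rightarrow> complex" where
  "adv_term U \<beta> V W Ez Fz \<theta> k j = \<i> * udot U \<beta> V W Ez Fz (ksub k j) j * \<theta> j"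

text \<open>Iterates: theta0 = - Delta^{-1} g, theta(n+1) = Delta^{-1}(u . grad theta(n) - g),
  in Fourier coefficients, with (Delta^{-1} g)_k = gamma_k and (Delta^{-1} f)_k = -|k|^{-2} f_k.
  The zero mode is set to 0 (mean-zero functions).\<close>

fun theta_iter :: "(wv \<Rightarrow> complex) \<Rightarrow> real \<Rightarrow> real \<Rightarrow> (wv \<Rightarrow> complex) \<Rightarrow> (wv \<Rightarrow> complex)
   \<Rightarrow> (wv \<Rightarrow> real^3) \<Rightarrow> (wv \<Rightarrow> real^3) \<Rightarrow> nat \<Rightarrow> wv \<Rightarrow> complex" where
  "theta_iter \<gamma> U \<beta> V W Ez Fz 0 = (\<lambda>k. if k = (0,0,0) then 0 else - \<gamma> k)"
| "theta_iter \<gamma> U \<beta> V W Ez Fz (Suc n) = (\<lambda>k. if k = (0,0,0) then 0 else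
     - of_real (knorm k powr (-2)) *
         infsum (adv_term U \<beta> V W Ez Fz (theta_iter \<gamma> U \<beta> V W Ez Fz n) k) (UNIV - {(0,0,0), k})
     - \<gamma> k)"

definition Kb :: "real \<Rightarrow> real \<Rightarrow> real \<Rightarrow> real" where
  "Kb \<kappa> \<beta> s = min 1 ((s / (2 * \<kappa>)) powr \<beta>)"

definition varpi :: "real \<Rightarrow> real \<Rightarrow> real" where
  "varpi \<kappa> \<beta> = (SUP k \<in> UNIV - {(0,0,0)}.
      inverse (Kb \<kappa> \<beta> (knorm k)) *
      infsum (\<lambda>j. knorm (ksub k j) powr \<beta> * inverse (knorm j) * Kb \<kappa> \<beta> (knorm j))
             (UNIV - {(0,0,0), k}))"

end

theory Submission
  imports Defs "HOL-Analysis.Analysis"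
begin

lemma kvec_eq: "kvec (a,b,c) = vector [of_int a, of_int b, of_int c]"
  by (simp add: kvec_def)

lemma knorm_eq: "knorm (a,b,c) = sqrt (of_int a ^ 2 + of_int b ^ 2 + of_int c ^ 2)"
  by (simp add: knorm_def kvec_def norm_eq_sqrt_inner inner_vec_def sum_3 power2_eq_square)

lemma knorm_nonneg: "knorm k \<ge> 0" by (simp add: knorm_def)

lemma knorm_zero[simp]: "knorm (0,0,0) = 0" by (simp add: knorm_eq)

lemma knorm_ge1: assumes "k \<noteq> (0,0,0)" shows "knorm k \<ge> 1"
proof -
  obtain a b c where k: "k = (a,b,c)" by (cases k) auto
  have "a \<noteq> 0 \<or> b \<noteq> 0 \<or> c \<noteq> 0" using assms k by auto
  hence "a^2 + b^2 + c^2 \<ge> (1::int)"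
    by (smt (verit) power2_less_eq_zero_iff zero_le_power2 int_one_le_iff_zero_less) 
  hence "(of_int a ^ 2 + of_int b ^ 2 + of_int c ^ 2 :: real) \<ge> 1"
    by (metis of_int_add of_int_le_iff of_int_1 of_int_power)
  thus ?thesis by (simp add: k knorm_eq)
qed

lemma kvec_sub: "kvec (ksub k j) = kvec k - kvec j"
  by (cases k; cases j) (simp add: ksub_def kvec_def vec_eq_iff forall_3)

lemma knorm_sub: "knorm (ksub k j) = norm (kvec k - kvec j)"
  by (simp add: knorm_def kvec_sub)

lemma ksub_zero_iff: "ksub k j = (0,0,0) \<longleftrightarrow> j = k"
  by (cases k; cases j) (auto simp: ksub_def)

lemma ksub_inj: "inj (ksub k)"
  by (rule injI, cases k) (auto simp: ksub_def split: prod.splits)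

lemma knorm_tri1: "knorm k \<le> knorm (ksub k j) + knorm j"
  unfolding knorm_def kvec_sub using norm_triangle_ineq[of "kvec k - kvec j" "kvec j"] by simp

lemma knorm_tri2: "knorm (ksub k j) \<le> knorm k + knorm j"
  unfolding knorm_def kvec_sub by (rule norm_triangle_ineq4)

lemma Kb_pos: "s > 0 \<Longrightarrow> \<kappa> > 0 \<Longrightarrow> Kb \<kappa> \<beta> s > 0"
  by (simp add: Kb_def)

lemma Kb_le1: "Kb \<kappa> \<beta> s \<le> 1" by (simp add: Kb_def)

lemma Kb_le_pow: "Kb \<kappa> \<beta> s \<le> (s/(2*\<kappa>)) powr \<beta>" by (simp add: Kb_def)

lemma Kb_anti: assumes "0 < s" "s \<le> t" "\<kappa> > 0" "\<beta> \<le> 0" shows "Kb \<kappa> \<beta> t \<le> Kb \<kappa> \<beta> s"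
proof -
  have "(t/(2*\<kappa>)) powr \<beta> \<le> (s/(2*\<kappa>)) powr \<beta>"
    using assms by (intro powr_mono2') (auto simp: divide_right_mono)
  thus ?thesis by (auto simp: Kb_def)
qed

lemma Kb_half: assumes "0 < s" "\<kappa> > 0" "\<beta> \<le> 0" shows "Kb \<kappa> \<beta> (s/2) \<le> 2 powr (-\<beta>) * Kb \<kappa> \<beta> s"
proof -
  have h: "(1/2::real) powr \<beta> = 2 powr (-\<beta>)" by (simp add: powr_divide powr_minus divide_simps)
  have q: "s/2/(2*\<kappa>) = (1/2) * (s/(2*\<kappa>))" by simp
  have e: "(s/2/(2*\<kappa>)) powr \<beta> = 2 powr (-\<beta>) * (s/(2*\<kappa>)) powr \<beta>"
    unfolding q h[symmetric] by (rule powr_mult)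
  have "1 \<le> 2 powr (-\<beta>)" using assms by (intro ge_one_powr_ge_zero) auto
  thus ?thesis unfolding Kb_def e
    by (smt (verit, best) mult_le_cancel_right1 powr_ge_zero min_def)
qed

lemma half_pow: assumes "1 \<le> s" "\<kappa> \<ge> 1" "\<beta> \<le> 0" shows "(s/2) powr \<beta> \<le> 2 powr (-\<beta>) * Kb \<kappa> \<beta> s"
proof -
  have a: "(s/2) powr \<beta> \<le> (1/2) powr \<beta>" using assms by (intro powr_mono2') auto
  have b: "(1/2::real) powr \<beta> = 2 powr (-\<beta>)" by (simp add: powr_divide powr_minus divide_simps)
  have c: "(s/2) powr \<beta> \<le> (s/(2*\<kappa>)) powr \<beta>" using assms
    by (intro powr_mono2') (auto simp: divide_simps)
  have "1 \<le> 2 powr (-\<beta>)" using assms by (intro ge_one_powr_ge_zero) auto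
  hence "(s/(2*\<kappa>)) powr \<beta> \<le> 2 powr (-\<beta>) * (s/(2*\<kappa>)) powr \<beta>"
    by (simp add: mult_le_cancel_right1)
  thus ?thesis using a b c unfolding Kb_def by (auto simp: min_def)
qed

lemma Kb_lower: assumes "1 \<le> s" "\<kappa> \<ge> 1" "\<beta> \<le> 0" shows "s powr \<beta> \<le> Kb \<kappa> \<beta> s"
proof -
  have a: "s powr \<beta> \<le> 1" using assms powr_mono2'[of \<beta> 1 s] by simp
  have "s powr \<beta> \<le> (s/(2*\<kappa>)) powr \<beta>" using assms
    by (intro powr_mono2') (auto simp: divide_simps)
  thus ?thesis using a unfolding Kb_def by simp
qed

definition gq :: "real \<Rightarrow> int \<Rightarrow> real" where
  "gq q a = (1 + \<bar>real_of_int a\<bar>) powr q"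

lemma gq_nonneg: "gq q a \<ge> 0" by (simp add: gq_def)

lemma gq_summable: assumes "q < -1" shows "gq q summable_on UNIV"
proof -
  have s0: "summable (\<lambda>n. real n powr q)" using assms summable_real_powr_iff by blast
  have s1: "summable (\<lambda>n. real (Suc n) powr q)"
    using s0 summable_Suc_iff[of "\<lambda>n. real n powr q"] by simp
  have s2: "(\<lambda>n. real (Suc n) powr q) summable_on UNIV"
    by (rule summable_nonneg_imp_summable_on[OF s1]) simp
  have e1: "(gq q \<circ> int) = (\<lambda>n. real (Suc n) powr q)"
    by (auto simp: gq_def add.commute)
  have e2: "(gq q \<circ> (\<lambda>n. - int n)) = (\<lambda>n. real (Suc n) powr q)"
    by (auto simp: gq_def add.commute)
  have a: "gq q summable_on range int"
    using summable_on_reindex[of int UNIV "gq q"] e1 s2 by (simp add: inj_on_def)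
  have b: "gq q summable_on range (\<lambda>n. - int n)"
    using summable_on_reindex[of "\<lambda>n. - int n" UNIV "gq q"] e2 s2 by (simp add: inj_on_def)
  have u: "range int \<union> range (\<lambda>n. - int n) = UNIV"
  proof -
    have "x \<in> range int \<union> range (\<lambda>n. - int n)" for x :: int
    proof (cases "x \<ge> 0")
      case True then have "x = int (nat x)" by simp
      thus ?thesis by blast
    next
      case False then have "x = - int (nat (-x))" by simp
      thus ?thesis by blast
    qed
    thus ?thesis by blast
  qed
  show ?thesis using summable_on_union[OF a b] u by simp
qed

lemma prod_summable:
  fixes f :: "'a \<Rightarrow> real" and g :: "'b \<Rightarrow> real"
  assumes "f summable_on UNIV" "g summable_on UNIV" "\<And>x. f x \<ge> 0" "\<And>x. g x \<ge> 0"
  shows "(\<lambda>(x,y). f x * g y) summable_on UNIV"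
proof -
  have "(\<lambda>(x,y). f x * g y) summable_on Sigma UNIV (\<lambda>_. UNIV)"
  proof (rule summable_on_SigmaI[where g = "\<lambda>x. f x * infsum g UNIV"])
    show "((\<lambda>y. case (x, y) of (x, y) \<Rightarrow> f x * g y) has_sum f x * infsum g UNIV) UNIV" for x
      using has_sum_cmult_right[OF has_sum_infsum[OF assms(2)], of "f x"] by simp
    show "(\<lambda>x. f x * infsum g UNIV) summable_on UNIV"
      by (rule summable_on_cmult_left[OF assms(1)])
    show "\<And>x y. x \<in> UNIV \<Longrightarrow> y \<in> UNIV \<Longrightarrow> 0 \<le> (case (x, y) of (x, y) \<Rightarrow> f x * g y)"
      using assms by simp
  qed
  thus ?thesis by simp
qed

lemma prod3_summable: assumes "q < -1"
  shows "(\<lambda>(a,b,c). gq q a * (gq q b * gq q c)) summable_on (UNIV :: wv set)"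
proof -
  have 2: "(\<lambda>(b,c). gq q b * gq q c) summable_on UNIV"
    by (rule prod_summable) (auto simp: gq_summable assms gq_nonneg)
  have "(\<lambda>(a,bc). gq q a * (case bc of (b,c) \<Rightarrow> gq q b * gq q c)) summable_on UNIV"
    by (rule prod_summable[OF gq_summable[OF assms] 2]) (auto simp: gq_nonneg)
  thus ?thesis by (simp add: case_prod_unfold)
qed

lemma lattice_point:
  assumes p: "p \<le> 0" and m: "m \<noteq> (0,0,0)"
  shows "knorm m powr p \<le> 8 powr (-p/3) * (case m of (a,b,c) \<Rightarrow> gq (p/3) a * (gq (p/3) b * gq (p/3) c))"
proof -
  obtain a b c where mm: "m = (a,b,c)" by (cases m) auto
  define x y z where "x = \<bar>real_of_int a\<bar>" "y = \<bar>real_of_int b\<bar>" "z = \<bar>real_of_int c\<bar>"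
  define M where "M = max x (max y z)"
  have M1: "M \<ge> 1"
  proof -
    have "a \<noteq> 0 \<or> b \<noteq> 0 \<or> c \<noteq> 0" using m mm by auto
    hence "x \<ge> 1 \<or> y \<ge> 1 \<or> z \<ge> 1" unfolding x_y_z_def by linarith
    thus ?thesis unfolding M_def by linarith
  qed
  have kn: "knorm m \<ge> M"
  proof -
    have "x^2 \<le> x^2 + y^2 + z^2" "y^2 \<le> x^2 + y^2 + z^2" "z^2 \<le> x^2 + y^2 + z^2" by auto
    hence "x \<le> sqrt (x^2 + y^2 + z^2)" "y \<le> sqrt (x^2 + y^2 + z^2)" "z \<le> sqrt (x^2 + y^2 + z^2)"
      using real_le_rsqrt unfolding x_y_z_def by auto
    moreover have "knorm m = sqrt (x^2 + y^2 + z^2)" unfolding mm knorm_eq x_y_z_def by simp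
    ultimately show ?thesis unfolding M_def by simp
  qed
  have X: "(1+x)*((1+y)*(1+z)) \<le> 8 * M^3"
  proof -
    have "0 \<le> x" "0 \<le> y" "0 \<le> z" unfolding x_y_z_def by auto
    moreover have "1 + x \<le> 2*M" "1 + y \<le> 2*M" "1+z \<le> 2*M" using M1 unfolding M_def by auto
    ultimately have "(1+x)*((1+y)*(1+z)) \<le> (2*M)*((2*M)*(2*M))"
      by (intro mult_mono) auto
    thus ?thesis by (simp add: power3_eq_cube)
  qed
  have Xpos: "(1+x)*((1+y)*(1+z)) > 0" unfolding x_y_z_def by (simp add: add_pos_nonneg)
  have "knorm m powr p \<le> M powr p" using p M1 kn by (intro powr_mono2') auto
  also have "M powr p = (M^3) powr (p/3)"
  proof -
    have "M^3 = M powr 3" using M1 powr_realpow[of M 3] by simp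
    hence "(M^3) powr (p/3) = M powr (3 * (p/3))" by (simp add: powr_powr)
    thus ?thesis by simp
  qed
  also have "(M^3) powr (p/3) \<le> ((1+x)*((1+y)*(1+z)) / 8) powr (p/3)"
    using p X Xpos by (intro powr_mono2') auto
  also have "\<dots> = ((1+x)*((1+y)*(1+z))) powr (p/3) / 8 powr (p/3)"
    using Xpos by (simp add: powr_divide)
  also have "\<dots> = 8 powr (-p/3) * ((1+x) powr (p/3) * ((1+y) powr (p/3) * (1+z) powr (p/3)))"
  proof -
    have e8: "8 powr (-p/3) = 1 / 8 powr (p/3)" using powr_minus_divide[of 8 "p/3"] by simp
    show ?thesis unfolding e8 powr_mult by simp
  qed
  finally have F: "knorm m powr p \<le> 8 powr (-p/3) * ((1+x) powr (p/3) * ((1+y) powr (p/3) * (1+z) powr (p/3)))" .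
  have g1: "gq (p/3) a = (1+x) powr (p/3)" "gq (p/3) b = (1+y) powr (p/3)" "gq (p/3) c = (1+z) powr (p/3)"
    unfolding gq_def x_y_z_def by (rule refl)+
  show ?thesis using F unfolding mm prod.case g1 .
qed

lemma lattice_summable:
  assumes p: "p < -3"
  shows "(\<lambda>m. knorm m powr p) summable_on (UNIV - {(0,0,0)})"
proof -
  have q: "p/3 < -1" using p by simp
  have s0: "(\<lambda>(a,b,c). gq (p/3) a * (gq (p/3) b * gq (p/3) c)) summable_on (UNIV::wv set)"
    by (rule prod3_summable[OF q])
  have s1: "(\<lambda>m. 8 powr (-p/3) * (case m of (a,b,c) \<Rightarrow> gq (p/3) a * (gq (p/3) b * gq (p/3) c))) summable_on UNIV"
    by (rule summable_on_cmult_right[OF s0])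
  have s2: "(\<lambda>m. 8 powr (-p/3) * (case m of (a,b,c) \<Rightarrow> gq (p/3) a * (gq (p/3) b * gq (p/3) c))) summable_on (UNIV - {(0,0,0)})"
    by (rule summable_on_subset[OF s1]) (rule subset_UNIV)
  show ?thesis
  proof (rule summable_on_comparison_test[OF s2])
    fix m :: wv assume "m \<in> UNIV - {(0,0,0)}"
    hence "m \<noteq> (0,0,0)" by blast
    thus "knorm m powr p \<le> 8 powr (-p/3) * (case m of (a,b,c) \<Rightarrow> gq (p/3) a * (gq (p/3) b * gq (p/3) c))"
      using lattice_point[of p m] p by linarith
  next
    fix m :: wv show "0 \<le> knorm m powr p" by (rule powr_ge_zero)
  qed
qed

definition Pt :: "real \<Rightarrow> real \<Rightarrow> wv \<Rightarrow> wv \<Rightarrow> real" where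
  "Pt \<kappa> \<beta> k j = knorm (ksub k j) powr \<beta> * inverse (knorm j) * Kb \<kappa> \<beta> (knorm j)"

lemma Pt_nonneg: "\<kappa> > 0 \<Longrightarrow> Pt \<kappa> \<beta> k j \<ge> 0"
  unfolding Pt_def Kb_def using knorm_nonneg[of j]
  by (intro mult_nonneg_nonneg) auto

lemma inv_powr: fixes s \<beta> :: real assumes "s > 0" shows "inverse s * s powr \<beta> = s powr (\<beta> - 1)"
proof -
  have e: "s powr \<beta> = s powr (\<beta>-1) * s" using powr_add[of s "\<beta>-1" 1] assms by simp
  show ?thesis using assms by (simp add: e)
qed

lemma Pt_point:
  assumes \<kappa>: "\<kappa> \<ge> 1" and \<beta>: "\<beta> \<le> 0" and k: "k \<noteq> (0,0,0)" and j: "j \<noteq> (0,0,0)" "j \<noteq> k"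
  shows "Pt \<kappa> \<beta> k j \<le> 2 powr (-\<beta>) * Kb \<kappa> \<beta> (knorm k) *
            ((2*\<kappa>) powr (-\<beta>) * knorm j powr (\<beta>-1) + 3 * knorm (ksub k j) powr (\<beta>-1))"
proof -
  define n s r where "n = knorm k" "s = knorm j" "r = knorm (ksub k j)"
  have n1: "n \<ge> 1" using knorm_ge1[OF k] n_s_r_def by simp
  have s1: "s \<ge> 1" using knorm_ge1[OF j(1)] n_s_r_def by simp
  have r1: "r \<ge> 1" using knorm_ge1[of "ksub k j"] j(2) ksub_zero_iff n_s_r_def by simp
  have t1: "n \<le> r + s" using knorm_tri1[of k j] n_s_r_def by simp
  have t2: "r \<le> n + s" using knorm_tri2[of k j] n_s_r_def by simp
  have Kn: "Kb \<kappa> \<beta> n > 0" using n1 \<kappa> by (intro Kb_pos) auto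
  have c2: "2 powr (-\<beta>) > (0::real)" by simp
  have nn1: "0 \<le> (2*\<kappa>) powr (-\<beta>) * s powr (\<beta>-1)" by simp
  have nn2: "0 \<le> 3 * r powr (\<beta>-1)" by simp
  have "r powr \<beta> * inverse s * Kb \<kappa> \<beta> s \<le> 2 powr (-\<beta>) * Kb \<kappa> \<beta> n *
            ((2*\<kappa>) powr (-\<beta>) * s powr (\<beta>-1) + 3 * r powr (\<beta>-1))"
  proof (cases "s < n/2")
    case True
    have "n/2 \<le> r" using True t1 by simp
    hence "r powr \<beta> \<le> (n/2) powr \<beta>" using n1 \<beta> by (intro powr_mono2') auto
    also have "\<dots> \<le> 2 powr (-\<beta>) * Kb \<kappa> \<beta> n" by (rule half_pow[OF n1 \<kappa> \<beta>])
    finally have A: "r powr \<beta> \<le> 2 powr (-\<beta>) * Kb \<kappa> \<beta> n" .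
    have "inverse s * Kb \<kappa> \<beta> s \<le> inverse s * (s/(2*\<kappa>)) powr \<beta>"
      using s1 by (intro mult_left_mono Kb_le_pow) auto
    also have "(s/(2*\<kappa>)) powr \<beta> = s powr \<beta> * (2*\<kappa>) powr (-\<beta>)"
    proof -
      have "(s/(2*\<kappa>)) powr \<beta> = s powr \<beta> / (2*\<kappa>) powr \<beta>"
        using s1 \<kappa> by (simp add: powr_divide)
      also have "\<dots> = s powr \<beta> * (2*\<kappa>) powr (-\<beta>)"
        by (simp only: powr_minus divide_inverse)
      finally show ?thesis .
    qed
    also have "inverse s * (s powr \<beta> * (2*\<kappa>) powr (-\<beta>)) = (2*\<kappa>) powr (-\<beta>) * (inverse s * s powr \<beta>)"
      by (simp only: mult.commute mult.left_commute)
    also have "\<dots> = (2*\<kappa>) powr (-\<beta>) * s powr (\<beta>-1)"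
      using inv_powr[of s \<beta>] s1 by simp
    finally have B: "inverse s * Kb \<kappa> \<beta> s \<le> (2*\<kappa>) powr (-\<beta>) * s powr (\<beta>-1)" .
    have B0: "0 \<le> inverse s * Kb \<kappa> \<beta> s" using s1 \<kappa> Kb_pos[of s \<kappa> \<beta>] by simp
    have "r powr \<beta> * inverse s * Kb \<kappa> \<beta> s = r powr \<beta> * (inverse s * Kb \<kappa> \<beta> s)" by simp
    also have "\<dots> \<le> (2 powr (-\<beta>) * Kb \<kappa> \<beta> n) * ((2*\<kappa>) powr (-\<beta>) * s powr (\<beta>-1))"
      by (rule mult_mono[OF A B]) (use B0 mult_nonneg_nonneg[OF less_imp_le[OF c2] less_imp_le[OF Kn]] in auto)
    also have "\<dots> \<le> 2 powr (-\<beta>) * Kb \<kappa> \<beta> n * ((2*\<kappa>) powr (-\<beta>) * s powr (\<beta>-1) + 3 * r powr (\<beta>-1))"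
      using Kn c2 nn2 by (intro mult_left_mono) auto
    finally show ?thesis .
  next
    case False
    hence sn: "n/2 \<le> s" by simp
    have "Kb \<kappa> \<beta> s \<le> Kb \<kappa> \<beta> (n/2)" using sn n1 \<kappa> \<beta> by (intro Kb_anti) auto
    also have "\<dots> \<le> 2 powr (-\<beta>) * Kb \<kappa> \<beta> n" using n1 \<kappa> \<beta> by (intro Kb_half) auto
    finally have A: "Kb \<kappa> \<beta> s \<le> 2 powr (-\<beta>) * Kb \<kappa> \<beta> n" .
    have "r \<le> 3 * s" using t2 sn by simp
    hence "inverse (3 * s) \<le> inverse r" using r1 by (intro le_imp_inverse_le) auto
    hence "inverse s \<le> 3 * inverse r" by simp
    hence "r powr \<beta> * inverse s \<le> r powr \<beta> * (3 * inverse r)" by (intro mult_left_mono) auto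
    also have "\<dots> = 3 * (inverse r * r powr \<beta>)" by (simp only: mult.commute mult.left_commute)
    also have "\<dots> = 3 * r powr (\<beta>-1)" using inv_powr[of r \<beta>] r1 by simp
    finally have B: "r powr \<beta> * inverse s \<le> 3 * r powr (\<beta>-1)" .
    have Ks: "0 \<le> Kb \<kappa> \<beta> s" using s1 \<kappa> Kb_pos[of s \<kappa> \<beta>] by simp
    have "r powr \<beta> * inverse s * Kb \<kappa> \<beta> s \<le> (3 * r powr (\<beta>-1)) * (2 powr (-\<beta>) * Kb \<kappa> \<beta> n)"
      by (rule mult_mono[OF B A]) (use Ks s1 in auto)
    also have "\<dots> = 2 powr (-\<beta>) * Kb \<kappa> \<beta> n * (3 * r powr (\<beta>-1))" by simp
    also have "\<dots> \<le> 2 powr (-\<beta>) * Kb \<kappa> \<beta> n * ((2*\<kappa>) powr (-\<beta>) * s powr (\<beta>-1) + 3 * r powr (\<beta>-1))"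
      using Kn c2 nn1 by (intro mult_left_mono) auto
    finally show ?thesis .
  qed
  thus ?thesis unfolding Pt_def n_s_r_def .
qed

definition Zs :: "real \<Rightarrow> real" where
  "Zs \<beta> = infsum (\<lambda>m. knorm m powr (\<beta>-1)) (UNIV - {(0,0,0)})"

lemma Zs_facts:
  assumes \<beta>: "\<beta> < -2"
  shows "(\<lambda>j. knorm j powr (\<beta>-1)) summable_on (UNIV - {(0,0,0), k})"
    and "(\<lambda>j. knorm (ksub k j) powr (\<beta>-1)) summable_on (UNIV - {(0,0,0), k})"
    and "infsum (\<lambda>j. knorm j powr (\<beta>-1)) (UNIV - {(0,0,0), k}) \<le> Zs \<beta>"
    and "infsum (\<lambda>j. knorm (ksub k j) powr (\<beta>-1)) (UNIV - {(0,0,0), k}) \<le> Zs \<beta>"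
proof -
  let ?h = "\<lambda>m. knorm m powr (\<beta>-1)"
  have S: "?h summable_on (UNIV - {(0,0,0)})" using lattice_summable[of "\<beta>-1"] \<beta> by simp
  show S1: "?h summable_on (UNIV - {(0,0,0), k})" by (rule summable_on_subset[OF S]) auto
  have im: "ksub k ` (UNIV - {(0,0,0), k}) \<subseteq> UNIV - {(0,0,0)}"
  proof (rule image_subsetI)
    fix j assume "j \<in> UNIV - {(0,0,0), k}"
    thus "ksub k j \<in> UNIV - {(0,0,0)}" using ksub_zero_iff[of k j] by blast
  qed
  have inj: "inj_on (ksub k) (UNIV - {(0,0,0), k})" by (rule inj_on_subset[OF ksub_inj]) simp
  have S2': "?h summable_on (ksub k ` (UNIV - {(0,0,0), k}))" by (rule summable_on_subset[OF S im])
  hence "(?h \<circ> ksub k) summable_on (UNIV - {(0,0,0), k})" using summable_on_reindex[OF inj] by blast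
  thus S2: "(\<lambda>j. knorm (ksub k j) powr (\<beta>-1)) summable_on (UNIV - {(0,0,0), k})" by (simp add: o_def)
  show "infsum ?h (UNIV - {(0,0,0), k}) \<le> Zs \<beta>"
    unfolding Zs_def by (rule infsum_mono2[OF S1 S]) auto
  have "infsum (\<lambda>j. knorm (ksub k j) powr (\<beta>-1)) (UNIV - {(0,0,0), k}) = infsum ?h (ksub k ` (UNIV - {(0,0,0), k}))"
    using infsum_reindex[OF inj, of ?h] by (simp add: o_def)
  also have "\<dots> \<le> Zs \<beta>" unfolding Zs_def by (rule infsum_mono2[OF S2' S im]) auto
  finally show "infsum (\<lambda>j. knorm (ksub k j) powr (\<beta>-1)) (UNIV - {(0,0,0), k}) \<le> Zs \<beta>" .
qed

lemma Zs_nonneg: "Zs \<beta> \<ge> 0" unfolding Zs_def by (rule infsum_nonneg) auto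

definition Mc :: "real \<Rightarrow> real \<Rightarrow> real" where
  "Mc \<kappa> \<beta> = 2 powr (-\<beta>) * ((2*\<kappa>) powr (-\<beta>) * Zs \<beta> + 3 * Zs \<beta>)"

lemma P_bound:
  assumes \<kappa>: "\<kappa> \<ge> 1" and \<beta>: "\<beta> < -2" and k: "k \<noteq> (0,0,0)"
  shows "Pt \<kappa> \<beta> k summable_on (UNIV - {(0,0,0), k})"
    and "infsum (Pt \<kappa> \<beta> k) (UNIV - {(0,0,0), k}) \<le> Mc \<kappa> \<beta> * Kb \<kappa> \<beta> (knorm k)"
proof -
  let ?A = "UNIV - {(0,0,0), k}"
  let ?c = "2 powr (-\<beta>) * Kb \<kappa> \<beta> (knorm k)"
  let ?B = "\<lambda>j. ?c * ((2*\<kappa>) powr (-\<beta>) * knorm j powr (\<beta>-1) + 3 * knorm (ksub k j) powr (\<beta>-1))"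
  note Z = Zs_facts[OF \<beta>, of k]
  have SB0: "(\<lambda>j. (2*\<kappa>) powr (-\<beta>) * knorm j powr (\<beta>-1) + 3 * knorm (ksub k j) powr (\<beta>-1)) summable_on ?A"
    by (intro summable_on_add summable_on_cmult_right Z(1,2))
  have SB: "?B summable_on ?A" by (rule summable_on_cmult_right[OF SB0])
  have pt: "\<And>j. j \<in> ?A \<Longrightarrow> Pt \<kappa> \<beta> k j \<le> ?B j"
    using Pt_point[OF \<kappa> _ k] \<beta> by auto
  have pn: "\<And>j. j \<in> ?A \<Longrightarrow> 0 \<le> Pt \<kappa> \<beta> k j" using Pt_nonneg \<kappa> by auto
  show SP: "Pt \<kappa> \<beta> k summable_on ?A" by (rule summable_on_comparison_test[OF SB pt pn])
  have "infsum (Pt \<kappa> \<beta> k) ?A \<le> infsum ?B ?A" by (rule infsum_mono[OF SP SB pt])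
  also have "infsum ?B ?A = ?c * ((2*\<kappa>) powr (-\<beta>) * infsum (\<lambda>j. knorm j powr (\<beta>-1)) ?A
                + 3 * infsum (\<lambda>j. knorm (ksub k j) powr (\<beta>-1)) ?A)"
    by (simp add: infsum_cmult_right infsum_add Z(1,2) summable_on_cmult_right SB0)
  also have "\<dots> \<le> ?c * ((2*\<kappa>) powr (-\<beta>) * Zs \<beta> + 3 * Zs \<beta>)"
  proof -
    have "0 \<le> ?c" using Kb_pos[of "knorm k" \<kappa> \<beta>] knorm_ge1[OF k] \<kappa> by simp
    moreover have "(2*\<kappa>) powr (-\<beta>) * infsum (\<lambda>j. knorm j powr (\<beta>-1)) ?A \<le> (2*\<kappa>) powr (-\<beta>) * Zs \<beta>"
      by (rule mult_left_mono[OF Z(3)]) simp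
    ultimately show ?thesis using Z(4) by (intro mult_left_mono) auto
  qed
  also have "\<dots> = Mc \<kappa> \<beta> * Kb \<kappa> \<beta> (knorm k)" unfolding Mc_def by simp
  finally show "infsum (Pt \<kappa> \<beta> k) ?A \<le> Mc \<kappa> \<beta> * Kb \<kappa> \<beta> (knorm k)" .
qed

lemma norm_vec3: "norm (vector [x, y, z] :: real^3) = sqrt (x^2 + y^2 + z^2)"
  by (simp add: norm_eq_sqrt_inner inner_vec_def sum_3 power2_eq_square)

lemma CH_e_norm:
  assumes "khnorm k > 0 \<or> norm (Ez k) = 1"
  shows "norm (CH_e Ez k) \<le> 1"
proof (cases "khnorm k > 0")
  case True
  obtain a b c where k: "k = (a,b,c)" by (cases k) auto
  define A B where "A = real_of_int a" "B = real_of_int b"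
  define h where "h = khnorm k"
  have h: "h = sqrt (A^2 + B^2)" unfolding h_def k khnorm_def A_B_def by simp
  have hp: "h > 0" using True h_def by simp
  have h2: "h^2 = A^2 + B^2" using h by simp
  have "CH_e Ez k = vector [B / h, - A / h, 0]" using True unfolding CH_e_def k A_B_def h_def by simp
  hence "norm (CH_e Ez k) = sqrt ((B/h)^2 + (-A/h)^2 + 0^2)" by (simp add: norm_vec3)
  also have "(B/h)^2 + (-A/h)^2 + 0^2 = (A^2 + B^2) / h^2" by (simp add: power_divide add_divide_distrib)
  also have "\<dots> = 1" using hp by (simp add: h2[symmetric])
  finally show ?thesis by simp
next
  case False
  thus ?thesis using assms unfolding CH_e_def by simp
qed

lemma CH_f_norm:
  assumes "khnorm k > 0 \<or> norm (Fz k) = 1"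
  shows "norm (CH_f Fz k) \<le> 1"
proof (cases "khnorm k > 0")
  case True
  obtain a b c where k: "k = (a,b,c)" by (cases k) auto
  define A B C where "A = real_of_int a" "B = real_of_int b" "C = real_of_int c"
  define h N where "h = khnorm k" "N = knorm k"
  have h: "h = sqrt (A^2 + B^2)" unfolding h_N_def k khnorm_def A_B_C_def by simp
  have N: "N = sqrt (A^2 + B^2 + C^2)" unfolding h_N_def k knorm_eq A_B_C_def by simp
  have hp: "h > 0" using True h_N_def by simp
  have h2: "h^2 = A^2 + B^2" using h by simp
  have N2: "N^2 = h^2 + C^2" using N h2 by simp
  have N2p: "N^2 > 0" using N2 hp by (simp add: add_pos_nonneg)
  have N0: "N \<ge> 0" using N by simp
  have Np: "N > 0" using N2p N0 by (cases "N = 0") auto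
  have "CH_f Fz k = vector [A * C / (N * h), B * C / (N * h), - (h^2) / (N * h)]"
    using True unfolding CH_f_def k A_B_C_def h_N_def by simp
  hence "norm (CH_f Fz k) = sqrt ((A * C / (N * h))^2 + (B * C / (N * h))^2 + (- (h^2) / (N * h))^2)"
    by (simp add: norm_vec3)
  also have "(A * C / (N * h))^2 + (B * C / (N * h))^2 + (- (h^2) / (N * h))^2
      = ((A^2 + B^2) * C^2 + h^2 * h^2) / (N^2 * h^2)"
    by (simp add: power_divide power_mult_distrib add_divide_distrib algebra_simps power2_eq_square)
  also have "\<dots> = (h^2 * (C^2 + h^2)) / (N^2 * h^2)" unfolding h2[symmetric] by (simp add: algebra_simps)
  also have "\<dots> = 1" using N2 hp Np by (simp add: add.commute)
  finally show ?thesis by simp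
next
  case False
  thus ?thesis using assms unfolding CH_f_def by simp
qed

lemma udot_bound:
  assumes U: "U \<ge> 0" and V: "cmod (V m) \<le> \<Xi>" and W: "cmod (W m) \<le> \<Xi>"
    and e: "norm (CH_e Ez m) \<le> 1" and f: "norm (CH_f Fz m) \<le> 1"
  shows "cmod (udot U \<beta> V W Ez Fz m j) \<le> knorm m powr \<beta> * U * (2 * \<Xi>) * knorm j"
proof -
  define x where "x = knorm m powr \<beta> * U"
  define ee ff where "ee = CH_e Ez m \<bullet> kvec j" "ff = CH_f Fz m \<bullet> kvec j"
  have x0: "x \<ge> 0" unfolding x_def using U by simp
  have ee: "\<bar>ee\<bar> \<le> knorm j"
  proof -
    have "\<bar>ee\<bar> \<le> norm (CH_e Ez m) * norm (kvec j)" unfolding ee_ff_def by (rule Cauchy_Schwarz_ineq2)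
    also have "\<dots> \<le> 1 * norm (kvec j)" by (rule mult_right_mono[OF e]) simp
    finally show ?thesis by (simp add: knorm_def)
  qed
  have ff: "\<bar>ff\<bar> \<le> knorm j"
  proof -
    have "\<bar>ff\<bar> \<le> norm (CH_f Fz m) * norm (kvec j)" unfolding ee_ff_def by (rule Cauchy_Schwarz_ineq2)
    also have "\<dots> \<le> 1 * norm (kvec j)" by (rule mult_right_mono[OF f]) simp
    finally show ?thesis by (simp add: knorm_def)
  qed
  have "cmod (V m * of_real ee + W m * of_real ff) \<le> cmod (V m) * \<bar>ee\<bar> + cmod (W m) * \<bar>ff\<bar>"
    by (metis norm_mult norm_of_real norm_triangle_ineq)
  also have "\<dots> \<le> \<Xi> * knorm j + \<Xi> * knorm j"
    using order_trans[OF norm_ge_zero V] by (intro add_mono mult_mono V W ee ff) (auto simp: knorm_nonneg)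
  finally have B: "cmod (V m * of_real ee + W m * of_real ff) \<le> 2 * \<Xi> * knorm j" by simp
  have "cmod (udot U \<beta> V W Ez Fz m j) = x * cmod (V m * of_real ee + W m * of_real ff)"
    unfolding udot_def ee_ff_def using x0 unfolding x_def by (simp add: norm_mult U)
  also have "\<dots> \<le> x * (2 * \<Xi> * knorm j)" by (rule mult_left_mono[OF B x0])
  finally show ?thesis unfolding x_def by (simp add: mult.assoc)
qed

definition wt :: "real \<Rightarrow> real \<Rightarrow> wv \<Rightarrow> real" where
  "wt \<kappa> \<beta> j = knorm j powr (-2) * Kb \<kappa> \<beta> (knorm j)"

lemma wt_nonneg: "\<kappa> > 0 \<Longrightarrow> wt \<kappa> \<beta> j \<ge> 0"
  unfolding wt_def Kb_def by (intro mult_nonneg_nonneg) (auto simp: knorm_nonneg)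

lemma varpi_facts:
  assumes \<kappa>: "\<kappa> \<ge> 1" and \<beta>: "\<beta> < -2"
  shows "\<And>k. k \<noteq> (0,0,0) \<Longrightarrow> infsum (Pt \<kappa> \<beta> k) (UNIV - {(0,0,0), k}) \<le> varpi \<kappa> \<beta> * Kb \<kappa> \<beta> (knorm k)"
    and "varpi \<kappa> \<beta> \<ge> 0"
proof -
  define f where "f k = inverse (Kb \<kappa> \<beta> (knorm k)) * infsum (Pt \<kappa> \<beta> k) (UNIV - {(0,0,0), k})" for k
  have vp: "varpi \<kappa> \<beta> = (SUP k \<in> UNIV - {(0,0,0)}. f k)"
    unfolding varpi_def f_def Pt_def by simp
  have Kp: "Kb \<kappa> \<beta> (knorm k) > 0" if k: "k \<noteq> (0,0,0)" for k
  proof -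
    have "knorm k \<ge> 1" by (rule knorm_ge1[OF k])
    thus ?thesis using \<kappa> by (intro Kb_pos) auto
  qed
  have fle: "f k \<le> Mc \<kappa> \<beta>" if k: "k \<noteq> (0,0,0)" for k
  proof -
    have "infsum (Pt \<kappa> \<beta> k) (UNIV - {(0,0,0), k}) \<le> Mc \<kappa> \<beta> * Kb \<kappa> \<beta> (knorm k)"
      by (rule P_bound(2)[OF \<kappa> \<beta> k])
    thus ?thesis unfolding f_def using Kp[OF k] by (simp add: field_simps)
  qed
  have bdd: "bdd_above (f ` (UNIV - {(0,0,0)}))"
    by (rule bdd_aboveI2[where M = "Mc \<kappa> \<beta>"]) (use fle in auto)
  have fup: "f k \<le> varpi \<kappa> \<beta>" if k: "k \<noteq> (0,0,0)" for k
    unfolding vp by (rule cSUP_upper[OF _ bdd]) (use k in auto)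
  have f0: "f k \<ge> 0" if k: "k \<noteq> (0,0,0)" for k
  proof -
    have "infsum (Pt \<kappa> \<beta> k) (UNIV - {(0,0,0), k}) \<ge> 0"
      by (rule infsum_nonneg) (use Pt_nonneg \<kappa> in auto)
    thus ?thesis unfolding f_def using Kp[OF k] by simp
  qed
  show "varpi \<kappa> \<beta> \<ge> 0" using f0[of "(1,0,0)"] fup[of "(1,0,0)"] by simp
  fix k :: wv assume k: "k \<noteq> (0,0,0)"
  have "infsum (Pt \<kappa> \<beta> k) (UNIV - {(0,0,0), k}) = Kb \<kappa> \<beta> (knorm k) * f k"
    unfolding f_def using Kp[OF k] by simp
  also have "\<dots> \<le> Kb \<kappa> \<beta> (knorm k) * varpi \<kappa> \<beta>"
    by (rule mult_left_mono[OF fup[OF k]]) (use Kp[OF k] in simp)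
  finally show "infsum (Pt \<kappa> \<beta> k) (UNIV - {(0,0,0), k}) \<le> varpi \<kappa> \<beta> * Kb \<kappa> \<beta> (knorm k)"
    by (simp add: mult.commute)
qed

lemma s_pow2: fixes s :: real assumes "s > 0" shows "s * s powr (-2) = inverse s"
proof -
  have "s powr (-2) = inverse (s powr 2)" by (simp add: powr_minus)
  also have "s powr 2 = s^2" using assms by (simp add: powr_numeral)
  finally show ?thesis using assms by (simp add: power2_eq_square)
qed

lemma adv_bound:
  assumes U: "U \<ge> 0"
    and VW: "\<And>m. m \<noteq> (0,0,0) \<Longrightarrow> cmod (V m) \<le> \<Xi> \<and> cmod (W m) \<le> \<Xi>"
    and EF: "\<And>m. m \<noteq> (0,0,0) \<Longrightarrow> khnorm m = 0 \<Longrightarrow> norm (Ez m) = 1 \<and> norm (Fz m) = 1"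
    and j: "j \<noteq> (0,0,0)" "j \<noteq> k"
    and th: "cmod (\<theta> j) \<le> A * wt \<kappa> \<beta> j"
  shows "cmod (adv_term U \<beta> V W Ez Fz \<theta> k j) \<le> 2 * U * \<Xi> * A * Pt \<kappa> \<beta> k j"
proof -
  let ?m = "ksub k j"
  have m: "?m \<noteq> (0,0,0)" using j ksub_zero_iff by simp
  have "khnorm ?m \<ge> 0" unfolding khnorm_def by (auto split: prod.splits)
  hence hn: "khnorm ?m > 0 \<or> khnorm ?m = 0" by linarith
  have e: "norm (CH_e Ez ?m) \<le> 1" by (rule CH_e_norm) (use hn EF[OF m] in blast)
  have f: "norm (CH_f Fz ?m) \<le> 1" by (rule CH_f_norm) (use hn EF[OF m] in blast)
  have ud: "cmod (udot U \<beta> V W Ez Fz ?m j) \<le> knorm ?m powr \<beta> * U * (2 * \<Xi>) * knorm j"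
    by (rule udot_bound[OF U _ _ e f]) (use VW[OF m] in auto)
  have s: "knorm j > 0" using knorm_ge1[OF j(1)] by simp
  have "cmod (adv_term U \<beta> V W Ez Fz \<theta> k j) = cmod (udot U \<beta> V W Ez Fz ?m j) * cmod (\<theta> j)"
    unfolding adv_term_def by (simp add: norm_mult)
  also have "\<dots> \<le> (knorm ?m powr \<beta> * U * (2 * \<Xi>) * knorm j) * (A * wt \<kappa> \<beta> j)"
    by (rule mult_mono[OF ud th]) (use order_trans[OF norm_ge_zero ud] in auto)
  also have "\<dots> = 2 * U * \<Xi> * A * (knorm ?m powr \<beta> * (knorm j * knorm j powr (-2)) * Kb \<kappa> \<beta> (knorm j))"
    unfolding wt_def by (simp only: mult.commute mult.left_commute mult.assoc)
  also have "\<dots> = 2 * U * \<Xi> * A * Pt \<kappa> \<beta> k j"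
    unfolding Pt_def s_pow2[OF s] ..
  finally show ?thesis .
qed

lemma T_bound:
  assumes \<kappa>: "\<kappa> \<ge> 1" and \<beta>: "\<beta> < -2" and U: "U \<ge> 0"
    and VW: "\<And>m. m \<noteq> (0,0,0) \<Longrightarrow> cmod (V m) \<le> \<Xi> \<and> cmod (W m) \<le> \<Xi>"
    and EF: "\<And>m. m \<noteq> (0,0,0) \<Longrightarrow> khnorm m = 0 \<Longrightarrow> norm (Ez m) = 1 \<and> norm (Fz m) = 1"
    and k: "k \<noteq> (0,0,0)" and A: "A \<ge> 0"
    and th: "\<And>j. j \<noteq> (0,0,0) \<Longrightarrow> cmod (\<theta> j) \<le> A * wt \<kappa> \<beta> j"
  shows "adv_term U \<beta> V W Ez Fz \<theta> k summable_on (UNIV - {(0,0,0), k})"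
    and "cmod (of_real (knorm k powr (-2)) * infsum (adv_term U \<beta> V W Ez Fz \<theta> k) (UNIV - {(0,0,0), k}))
           \<le> (2 * U * \<Xi> * varpi \<kappa> \<beta>) * A * wt \<kappa> \<beta> k"
proof -
  let ?S = "UNIV - {(0,0,0), k}"
  let ?f = "adv_term U \<beta> V W Ez Fz \<theta> k"
  have "cmod (V (1,0,0)) \<le> \<Xi>" using VW[of "(1,0,0)"] by simp
  hence X: "\<Xi> \<ge> 0" by (meson norm_ge_zero order_trans)
  have c0: "2 * U * \<Xi> * A \<ge> 0" using U X A by simp
  have pb: "norm (?f j) \<le> 2 * U * \<Xi> * A * Pt \<kappa> \<beta> k j" if "j \<in> ?S" for j
  proof -
    have j0: "j \<noteq> (0,0,0)" and jk: "j \<noteq> k" using that by auto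
    show ?thesis using adv_bound[where U=U and V=V and W=W and Ez=Ez and Fz=Fz and \<Xi>=\<Xi> and \<theta>=\<theta> and A=A and \<kappa>=\<kappa> and \<beta>=\<beta> and j=j and k=k, OF U VW EF j0 jk th[OF j0]] .
  qed
  have SP: "(\<lambda>j. 2 * U * \<Xi> * A * Pt \<kappa> \<beta> k j) summable_on ?S"
    by (rule summable_on_cmult_right[OF P_bound(1)[OF \<kappa> \<beta> k]])
  have SN: "(\<lambda>j. norm (?f j)) summable_on ?S"
    by (rule summable_on_comparison_test[OF SP]) (erule pb, rule norm_ge_zero)
  show Sf: "?f summable_on ?S" by (rule abs_summable_summable[OF SN])
  have "norm (infsum ?f ?S) \<le> infsum (\<lambda>j. norm (?f j)) ?S" by (rule norm_infsum_bound[OF SN])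
  also have "\<dots> \<le> infsum (\<lambda>j. 2 * U * \<Xi> * A * Pt \<kappa> \<beta> k j) ?S" by (rule infsum_mono[OF SN SP]) (erule pb)
  also have "\<dots> = 2 * U * \<Xi> * A * infsum (Pt \<kappa> \<beta> k) ?S"
    by (rule infsum_cmult_right) (rule P_bound(1)[OF \<kappa> \<beta> k])
  also have "\<dots> \<le> 2 * U * \<Xi> * A * (varpi \<kappa> \<beta> * Kb \<kappa> \<beta> (knorm k))"
    by (rule mult_left_mono[OF varpi_facts(1)[OF \<kappa> \<beta> k] c0])
  finally have N: "norm (infsum ?f ?S) \<le> 2 * U * \<Xi> * A * (varpi \<kappa> \<beta> * Kb \<kappa> \<beta> (knorm k))" .
  have p0: "knorm k powr (-2) \<ge> 0" by simp
  have "cmod (of_real (knorm k powr (-2)) * infsum ?f ?S) = knorm k powr (-2) * norm (infsum ?f ?S)"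
    by (simp add: norm_mult)
  also have "\<dots> \<le> knorm k powr (-2) * (2 * U * \<Xi> * A * (varpi \<kappa> \<beta> * Kb \<kappa> \<beta> (knorm k)))"
    by (rule mult_left_mono[OF N p0])
  also have "\<dots> = (2 * U * \<Xi> * varpi \<kappa> \<beta>) * A * wt \<kappa> \<beta> k"
    unfolding wt_def by (simp only: mult.commute mult.left_commute mult.assoc)
  finally show "cmod (of_real (knorm k powr (-2)) * infsum ?f ?S) \<le> (2 * U * \<Xi> * varpi \<kappa> \<beta>) * A * wt \<kappa> \<beta> k" .
qed

lemma infsum_diff':
  fixes f g :: "'a \<Rightarrow> complex"
  assumes "f summable_on S" "g summable_on S"
  shows "infsum f S - infsum g S = infsum (\<lambda>x. f x - g x) S"
proof -
  have "infsum (\<lambda>x. f x + - g x) S = infsum f S + infsum (\<lambda>x. - g x) S"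
    by (rule infsum_add[OF assms(1) summable_on_uminus[THEN iffD2, OF assms(2)]])
  thus ?thesis by (simp add: infsum_uminus)
qed

lemma adv_diff: "adv_term U \<beta> V W Ez Fz \<theta>1 k j - adv_term U \<beta> V W Ez Fz \<theta>2 k j
   = adv_term U \<beta> V W Ez Fz (\<lambda>j. \<theta>1 j - \<theta>2 j) k j"
  unfolding adv_term_def by (simp add: algebra_simps)

lemma knorm_comp_le: "\<bar>real_of_int a\<bar> \<le> knorm (a,b,c)" "\<bar>real_of_int b\<bar> \<le> knorm (a,b,c)" "\<bar>real_of_int c\<bar> \<le> knorm (a,b,c)"
  unfolding knorm_eq by (auto intro!: real_le_rsqrt)

lemma gamma_bound:
  fixes \<gamma> :: "wv \<Rightarrow> complex"
  assumes cg: "cg \<ge> 0" and \<kappa>: "\<kappa> \<ge> 1" and \<alpha>: "\<alpha> \<le> \<beta> - 2" and \<beta>: "\<beta> \<le> 0"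
    and dec: "\<And>k. k \<noteq> (0,0,0) \<Longrightarrow> knorm k \<ge> \<kappa> \<Longrightarrow> cmod (\<gamma> k) \<le> cg * knorm k powr \<alpha>"
  shows "\<exists>G\<ge>0. \<forall>k. k \<noteq> (0,0,0) \<longrightarrow> cmod (\<gamma> k) \<le> G * wt \<kappa> \<beta> k"
proof -
  define Fs where "Fs = {k. k \<noteq> (0,0,0) \<and> knorm k < \<kappa>}"
  define K where "K = ceiling \<kappa>"
  have fin: "finite Fs"
  proof (rule finite_subset)
    show "Fs \<subseteq> {-K..K} \<times> {-K..K} \<times> {-K..K}"
    proof
      fix k assume "k \<in> Fs"
      then obtain a b c where k: "k = (a,b,c)" and lt: "knorm (a,b,c) < \<kappa>" unfolding Fs_def by (cases k) auto
      have "\<bar>real_of_int a\<bar> < \<kappa>" using knorm_comp_le(1)[where a=a and b=b and c=c] lt by linarith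
      moreover have "\<bar>real_of_int b\<bar> < \<kappa>" using knorm_comp_le(2)[where a=a and b=b and c=c] lt by linarith
      moreover have "\<bar>real_of_int c\<bar> < \<kappa>" using knorm_comp_le(3)[where a=a and b=b and c=c] lt by linarith
      ultimately have "\<bar>real_of_int a\<bar> < \<kappa>" "\<bar>real_of_int b\<bar> < \<kappa>" "\<bar>real_of_int c\<bar> < \<kappa>" by auto
      hence "\<bar>a\<bar> \<le> K" "\<bar>b\<bar> \<le> K" "\<bar>c\<bar> \<le> K" unfolding K_def by linarith+
      thus "k \<in> {-K..K} \<times> {-K..K} \<times> {-K..K}" unfolding k by auto
    qed
    show "finite ({-K..K} \<times> {-K..K} \<times> {-K..K})" by simp
  qed
  have wp: "wt \<kappa> \<beta> k > 0" if k: "k \<noteq> (0,0,0)" for k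
  proof -
    have "knorm k \<ge> 1" by (rule knorm_ge1[OF k])
    thus ?thesis unfolding wt_def using \<kappa> Kb_pos[of "knorm k" \<kappa> \<beta>] by simp
  qed
  have tnn: "0 \<le> cmod (\<gamma> k) / wt \<kappa> \<beta> k" if "k \<in> Fs" for k
  proof -
    have "k \<noteq> (0,0,0)" using that unfolding Fs_def by blast
    thus ?thesis by (intro divide_nonneg_pos norm_ge_zero wp)
  qed
  define G where "G = cg + (\<Sum>k\<in>Fs. cmod (\<gamma> k) / wt \<kappa> \<beta> k)"
  have Gs: "(\<Sum>k\<in>Fs. cmod (\<gamma> k) / wt \<kappa> \<beta> k) \<ge> 0"
    by (rule sum_nonneg) (rule tnn)
  have "cmod (\<gamma> k) \<le> G * wt \<kappa> \<beta> k" if k: "k \<noteq> (0,0,0)" for k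
  proof (cases "knorm k < \<kappa>")
    case True
    hence kF: "k \<in> Fs" using k Fs_def by simp
    have "cmod (\<gamma> k) / wt \<kappa> \<beta> k \<le> (\<Sum>k\<in>Fs. cmod (\<gamma> k) / wt \<kappa> \<beta> k)"
      by (rule member_le_sum[OF kF _ fin]) (rule tnn, blast)
    also have "\<dots> \<le> G" unfolding G_def using cg by simp
    finally show ?thesis using wp[OF k] by (simp add: field_simps)
  next
    case False
    define n where "n = knorm k"
    have n1: "n \<ge> 1" unfolding n_def by (rule knorm_ge1[OF k])
    have "cmod (\<gamma> k) \<le> cg * n powr \<alpha>" using dec[OF k] False n_def by simp
    also have "n powr \<alpha> \<le> n powr (\<beta> - 2)" by (rule powr_mono[OF \<alpha> n1])
    also have "n powr (\<beta> - 2) = n powr \<beta> * n powr (-2)" by (simp add: powr_add[symmetric])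
    also have "\<dots> \<le> Kb \<kappa> \<beta> n * n powr (-2)"
      by (rule mult_right_mono[OF Kb_lower[OF n1 \<kappa> \<beta>]]) simp
    also have "\<dots> = wt \<kappa> \<beta> k" unfolding wt_def n_def by simp
    finally have "cmod (\<gamma> k) \<le> cg * wt \<kappa> \<beta> k" using cg by (simp add: mult_left_mono)
    also have "\<dots> \<le> G * wt \<kappa> \<beta> k" using Gs wp[OF k] unfolding G_def by (intro mult_right_mono) auto
    finally show ?thesis .
  qed
  moreover have "G \<ge> 0" unfolding G_def using cg Gs by simp
  ultimately show ?thesis by blast
qed

theorem mainTheorem7:
  fixes \<gamma> :: "wv \<Rightarrow> complex" and cg \<kappa>g \<alpha> \<beta> :: real
  assumes cg: "cg \<ge> 0"
    and \<kappa>g: "\<kappa>g \<ge> 16"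
    and \<alpha>neg: "\<alpha> < 0"
    and \<alpha>: "\<alpha> \<le> 2 * min \<beta> (-3) - 1"
    and \<beta>: "\<beta> < -2"
    and \<gamma>_conj: "\<And>k. k \<noteq> (0,0,0) \<Longrightarrow> \<gamma> (kneg k) = cnj (\<gamma> k)"
    and \<gamma>_decay: "\<And>k. k \<noteq> (0,0,0) \<Longrightarrow> knorm k \<ge> \<kappa>g \<Longrightarrow> cmod (\<gamma> k) \<le> cg * knorm k powr \<alpha>"
  shows "\<exists>C::real. \<forall>(U::real) (\<Xi>::real) (V::wv \<Rightarrow> complex) (W::wv \<Rightarrow> complex)
            (Ez::wv \<Rightarrow> real^3) (Fz::wv \<Rightarrow> real^3).
     U \<ge> 0
     \<longrightarrow> (\<forall>k. k \<noteq> (0,0,0) \<longrightarrow> V (kneg k) = cnj (V k) \<and> W (kneg k) = cnj (W k))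
     \<longrightarrow> (\<forall>k. k \<noteq> (0,0,0) \<longrightarrow> cmod (V k) \<le> \<Xi> \<and> cmod (W k) \<le> \<Xi>)
     \<longrightarrow> (\<forall>k. k \<noteq> (0,0,0) \<longrightarrow> khnorm k = 0 \<longrightarrow>
            norm (Ez k) = 1 \<and> norm (Fz k) = 1 \<and> Ez k \<bullet> Fz k = 0 \<and>
            Ez k \<bullet> kvec k = 0 \<and> Fz k \<bullet> kvec k = 0)
     \<longrightarrow> 4 * U * \<Xi> * varpi \<kappa>g \<beta> < 1
     \<longrightarrow> (\<forall>n k. k \<noteq> (0,0,0) \<longrightarrow>
            adv_term U \<beta> V W Ez Fz (theta_iter \<gamma> U \<beta> V W Ez Fz n) k summable_on (UNIV - {(0,0,0), k}))
       \<and> (\<exists>\<theta>inf :: wv \<Rightarrow> complex.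
            (\<forall>k. k \<noteq> (0,0,0) \<longrightarrow> (\<lambda>n. theta_iter \<gamma> U \<beta> V W Ez Fz n k) \<longlonglongrightarrow> \<theta>inf k)
          \<and> (\<forall>k. k \<noteq> (0,0,0) \<longrightarrow>
               cmod (theta_iter \<gamma> U \<beta> V W Ez Fz 1 k - \<theta>inf k)
                 \<le> (C * U * \<Xi>) * (4 * U * \<Xi> * varpi \<kappa>g \<beta>)
                     * knorm k powr (-2) * Kb \<kappa>g \<beta> (knorm k)))"
proof -
  have \<kappa>1: "\<kappa>g \<ge> 1" using \<kappa>g by simp
  have \<beta>0: "\<beta> \<le> 0" using \<beta> by simp
  have \<alpha>2: "\<alpha> \<le> \<beta> - 2" using \<alpha> \<beta> by (simp add: min_def split: if_splits)
  obtain G where G0: "G \<ge> 0" and Gb: "\<forall>k. k \<noteq> (0,0,0) \<longrightarrow> cmod (\<gamma> k) \<le> G * wt \<kappa>g \<beta> k"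
    using gamma_bound[OF cg \<kappa>1 \<alpha>2 \<beta>0 \<gamma>_decay] by blast
  define v where "v = varpi \<kappa>g \<beta>"
  have v0: "v \<ge> 0" using varpi_facts(2)[OF \<kappa>1 \<beta>] v_def by simp
  show ?thesis
  proof (rule exI[of _ "2 * G * v"], intro allI impI)
    fix U \<Xi> :: real and V W :: "wv \<Rightarrow> complex" and Ez Fz :: "wv \<Rightarrow> real^3"
    assume U: "U \<ge> 0"
      and conj: "\<forall>k. k \<noteq> (0,0,0) \<longrightarrow> V (kneg k) = cnj (V k) \<and> W (kneg k) = cnj (W k)"
      and VWb: "\<forall>k. k \<noteq> (0,0,0) \<longrightarrow> cmod (V k) \<le> \<Xi> \<and> cmod (W k) \<le> \<Xi>"
      and EFb: "\<forall>k. k \<noteq> (0,0,0) \<longrightarrow> khnorm k = 0 \<longrightarrow>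
            norm (Ez k) = 1 \<and> norm (Fz k) = 1 \<and> Ez k \<bullet> Fz k = 0 \<and>
            Ez k \<bullet> kvec k = 0 \<and> Fz k \<bullet> kvec k = 0"
      and eps: "4 * U * \<Xi> * varpi \<kappa>g \<beta> < 1"
    have VW: "\<And>m. m \<noteq> (0,0,0) \<Longrightarrow> cmod (V m) \<le> \<Xi> \<and> cmod (W m) \<le> \<Xi>" using VWb by blast
    have EF: "\<And>m. m \<noteq> (0,0,0) \<Longrightarrow> khnorm m = 0 \<Longrightarrow> norm (Ez m) = 1 \<and> norm (Fz m) = 1"
      using EFb by blast
    have "cmod (V (1,0,0)) \<le> \<Xi>" using VW[of "(1,0,0)"] by simp
    hence X0: "\<Xi> \<ge> 0" by (meson norm_ge_zero order_trans)
    define q where "q = 2 * U * \<Xi> * v"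
    have q0: "q \<ge> 0" unfolding q_def using U X0 v0 by simp
    have q2: "2 * q < 1" unfolding q_def using eps v_def by simp
    hence q1: "q < 1" using q0 by simp
    define th where "th = theta_iter \<gamma> U \<beta> V W Ez Fz"
    define S where "S k = UNIV - {(0::int,0::int,0::int), k}" for k :: wv
    define T where "T \<theta> k = of_real (knorm k powr (-2)) * infsum (adv_term U \<beta> V W Ez Fz \<theta> k) (S k)"
      for \<theta> :: "wv \<Rightarrow> complex" and k
    have thS: "th (Suc n) k = - T (th n) k - \<gamma> k" if "k \<noteq> (0,0,0)" for n k
      using that unfolding th_def T_def S_def by simp
    have th0: "th 0 k = - \<gamma> k" if "k \<noteq> (0,0,0)" for k
      using that unfolding th_def by simp
    have Tb: "adv_term U \<beta> V W Ez Fz \<theta> k summable_on (S k) \<and> cmod (T \<theta> k) \<le> q * A * wt \<kappa>g \<beta> k"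
      if A: "A \<ge> 0" and hb: "\<forall>j. j \<noteq> (0,0,0) \<longrightarrow> cmod (\<theta> j) \<le> A * wt \<kappa>g \<beta> j" and k: "k \<noteq> (0,0,0)"
      for \<theta> A k
    proof -
      have hb': "\<And>j. j \<noteq> (0,0,0) \<Longrightarrow> cmod (\<theta> j) \<le> A * wt \<kappa>g \<beta> j" using hb by blast
      note TT = T_bound[OF \<kappa>1 \<beta> U VW EF k A hb']
      show ?thesis unfolding T_def S_def q_def v_def using TT by simp
    qed
    have bnd: "\<exists>A\<ge>0. \<forall>j. j \<noteq> (0,0,0) \<longrightarrow> cmod (th n j) \<le> A * wt \<kappa>g \<beta> j" for n
    proof (induction n)
      case 0
      show ?case using G0 Gb th0 by (intro exI[of _ G]) auto
    next
      case (Suc n)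
      then obtain A where A: "A \<ge> 0" and hA: "\<forall>j. j \<noteq> (0,0,0) \<longrightarrow> cmod (th n j) \<le> A * wt \<kappa>g \<beta> j" by blast
      have "cmod (th (Suc n) j) \<le> (q * A + G) * wt \<kappa>g \<beta> j" if j: "j \<noteq> (0,0,0)" for j
      proof -
        have "cmod (th (Suc n) j) = cmod (- T (th n) j - \<gamma> j)" using thS[OF j] by simp
        also have "\<dots> \<le> cmod (T (th n) j) + cmod (\<gamma> j)" by (rule norm_triangle_ineq4[THEN order_trans]) simp
        also have "\<dots> \<le> q * A * wt \<kappa>g \<beta> j + G * wt \<kappa>g \<beta> j"
          using Tb[OF A hA j] Gb[rule_format, OF j] by (intro add_mono) auto
        finally show ?thesis by (simp add: algebra_simps)
      qed
      thus ?case using A q0 G0 by (intro exI[of _ "q * A + G"]) auto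
    qed
    have summ: "adv_term U \<beta> V W Ez Fz (th n) k summable_on (S k)" if k: "k \<noteq> (0,0,0)" for n k
    proof -
      obtain A where "A \<ge> 0" "\<forall>j. j \<noteq> (0,0,0) \<longrightarrow> cmod (th n j) \<le> A * wt \<kappa>g \<beta> j" using bnd[of n] by blast
      thus ?thesis using Tb k by blast
    qed
    define d where "d n = (\<lambda>j. th (Suc n) j - th n j)" for n
    have d0: "d 0 k = - T (th 0) k" if k: "k \<noteq> (0,0,0)" for k
      unfolding d_def using thS[OF k, of 0] th0[OF k] by simp
    have dS: "d (Suc n) k = - T (d n) k" if k: "k \<noteq> (0,0,0)" for n k
    proof -
      have "d (Suc n) k = T (th n) k - T (th (Suc n)) k"
        unfolding d_def using thS[OF k, of n] thS[OF k, of "Suc n"] by simp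
      also have "\<dots> = - (of_real (knorm k powr (-2)) *
           (infsum (adv_term U \<beta> V W Ez Fz (th (Suc n)) k) (S k) - infsum (adv_term U \<beta> V W Ez Fz (th n) k) (S k)))"
        unfolding T_def by (simp add: algebra_simps)
      also have "infsum (adv_term U \<beta> V W Ez Fz (th (Suc n)) k) (S k) - infsum (adv_term U \<beta> V W Ez Fz (th n) k) (S k)
          = infsum (\<lambda>j. adv_term U \<beta> V W Ez Fz (th (Suc n)) k j - adv_term U \<beta> V W Ez Fz (th n) k j) (S k)"
        by (rule infsum_diff'[OF summ[OF k] summ[OF k]])
      also have "(\<lambda>j. adv_term U \<beta> V W Ez Fz (th (Suc n)) k j - adv_term U \<beta> V W Ez Fz (th n) k j)
          = adv_term U \<beta> V W Ez Fz (d n) k"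
        unfolding d_def by (rule ext) (rule adv_diff)
      finally show ?thesis unfolding T_def by simp
    qed
    have db: "\<forall>j. j \<noteq> (0,0,0) \<longrightarrow> cmod (d n j) \<le> q ^ Suc n * G * wt \<kappa>g \<beta> j" for n
    proof (induction n)
      case 0
      have hb: "\<forall>j. j \<noteq> (0,0,0) \<longrightarrow> cmod (th 0 j) \<le> G * wt \<kappa>g \<beta> j" using Gb th0 by auto
      show ?case using Tb[OF G0 hb] d0 by auto
    next
      case (Suc n)
      have A: "q ^ Suc n * G \<ge> 0" using q0 G0 by simp
      have hb: "\<forall>j. j \<noteq> (0,0,0) \<longrightarrow> cmod (d n j) \<le> q ^ Suc n * G * wt \<kappa>g \<beta> j" by (rule Suc.IH)
      show ?case using Tb[OF A hb] dS by (auto simp: mult.assoc)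
    qed
    define L where "L k = th 0 k + (\<Sum>i. d i k)" for k
    have wnn: "wt \<kappa>g \<beta> k \<ge> 0" for k using wt_nonneg \<kappa>1 by simp
    have sumd: "summable (\<lambda>i. norm (d i k))" if k: "k \<noteq> (0,0,0)" for k
    proof (rule summable_comparison_test)
      show "\<exists>N. \<forall>i\<ge>N. norm (norm (d i k)) \<le> (q * G * wt \<kappa>g \<beta> k) * q ^ i"
      proof (intro exI allI impI)
        fix i :: nat
        have "cmod (d i k) \<le> q ^ Suc i * G * wt \<kappa>g \<beta> k" using db[of i] k by blast
        also have "\<dots> = (q * G * wt \<kappa>g \<beta> k) * q ^ i" by (simp add: mult.commute mult.left_commute)
        finally show "norm (norm (d i k)) \<le> (q * G * wt \<kappa>g \<beta> k) * q ^ i" by simp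
      qed
      show "summable (\<lambda>i. (q * G * wt \<kappa>g \<beta> k) * q ^ i)"
        by (rule summable_mult) (rule summable_geometric, use q0 q1 in simp)
    qed
    have thsum: "th n k = th 0 k + (\<Sum>i<n. d i k)" for n k
      by (induction n) (auto simp: d_def)
    have conv: "(\<lambda>n. th n k) \<longlonglongrightarrow> L k" if k: "k \<noteq> (0,0,0)" for k
    proof -
      have "summable (\<lambda>i. d i k)" using sumd[OF k] by (rule summable_norm_cancel)
      hence "(\<lambda>n. \<Sum>i<n. d i k) \<longlonglongrightarrow> (\<Sum>i. d i k)" by (rule summable_LIMSEQ)
      hence "(\<lambda>n. th 0 k + (\<Sum>i<n. d i k)) \<longlonglongrightarrow> th 0 k + (\<Sum>i. d i k)" by (intro tendsto_add tendsto_const)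
      thus ?thesis unfolding L_def thsum[symmetric] .
    qed
    have err: "cmod (th 1 k - L k) \<le> (2 * G * v * U * \<Xi>) * (4 * U * \<Xi> * varpi \<kappa>g \<beta>)
                     * knorm k powr (-2) * Kb \<kappa>g \<beta> (knorm k)" if k: "k \<noteq> (0,0,0)" for k
    proof -
      have sd: "summable (\<lambda>i. d i k)" using sumd[OF k] by (rule summable_norm_cancel)
      have sn: "summable (\<lambda>i. norm (d (Suc i) k))" using sumd[OF k] by (subst summable_Suc_iff)
      have e1: "th 1 k - L k = - (\<Sum>i. d (Suc i) k)"
        using suminf_split_head[OF sd] unfolding L_def d_def by simp
      define c where "c = q^2 * G * wt \<kappa>g \<beta> k"
      have gs: "summable (\<lambda>i. c * q ^ i)" by (rule summable_mult) (rule summable_geometric, use q0 q1 in simp)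
      have "cmod (th 1 k - L k) = norm (\<Sum>i. d (Suc i) k)" using e1 by simp
      also have "\<dots> \<le> (\<Sum>i. norm (d (Suc i) k))" by (rule summable_norm[OF sn])
      also have "\<dots> \<le> (\<Sum>i. c * q ^ i)"
      proof (rule suminf_le[OF _ sn gs])
        fix i
        have "cmod (d (Suc i) k) \<le> q ^ Suc (Suc i) * G * wt \<kappa>g \<beta> k" using db[of "Suc i"] k by blast
        also have "\<dots> = c * q ^ i" unfolding c_def by (simp add: power2_eq_square mult.commute mult.left_commute)
        finally show "norm (d (Suc i) k) \<le> c * q ^ i" .
      qed
      also have "\<dots> = c * (1 / (1 - q))" using suminf_mult[OF summable_geometric[of q]] suminf_geometric[of q] q0 q1 by simp
      also have "\<dots> \<le> c * 2"
      proof (rule mult_left_mono)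
        show "1 / (1 - q) \<le> 2" using q2 q1 by (simp add: field_simps)
        show "0 \<le> c" unfolding c_def using G0 wnn by simp
      qed
      also have "c * 2 = (2 * G * v * U * \<Xi>) * (4 * U * \<Xi> * varpi \<kappa>g \<beta>) * knorm k powr (-2) * Kb \<kappa>g \<beta> (knorm k)"
        unfolding c_def q_def wt_def v_def by (simp add: power2_eq_square algebra_simps)
      finally show ?thesis .
    qed
    show "(\<forall>n k. k \<noteq> (0,0,0) \<longrightarrow>
            adv_term U \<beta> V W Ez Fz (theta_iter \<gamma> U \<beta> V W Ez Fz n) k summable_on (UNIV - {(0,0,0), k}))
       \<and> (\<exists>\<theta>inf :: wv \<Rightarrow> complex.
            (\<forall>k. k \<noteq> (0,0,0) \<longrightarrow> (\<lambda>n. theta_iter \<gamma> U \<beta> V W Ez Fz n k) \<longlonglongrightarrow> \<theta>inf k)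
          \<and> (\<forall>k. k \<noteq> (0,0,0) \<longrightarrow>
               cmod (theta_iter \<gamma> U \<beta> V W Ez Fz 1 k - \<theta>inf k)
                 \<le> (2 * G * v * U * \<Xi>) * (4 * U * \<Xi> * varpi \<kappa>g \<beta>)
                     * knorm k powr (-2) * Kb \<kappa>g \<beta> (knorm k)))"
    proof (intro conjI allI impI exI[of _ L])
      fix n :: nat and k :: wv assume "k \<noteq> (0,0,0)"
      thus "adv_term U \<beta> V W Ez Fz (theta_iter \<gamma> U \<beta> V W Ez Fz n) k summable_on (UNIV - {(0,0,0), k})"
        using summ unfolding th_def S_def by blast
    qed (use conv err in \<open>auto simp: th_def\<close>)
  qed
qed

end
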